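(* Let $G$ be a finite graph whose vertex set is partitioned into stable sets $V_1,\ldots,V_r$. Let $x_1$ be a vertex in $V_r$, and suppose that $G[V_{[r-1]}]$ has an ISR (with respect to the partition $V_1,\ldots,V_{r-1}$). Suppose there do not exist a set $J \subseteq [r-1]$ and a set $D \subseteq V_J \cup \{x_1\}$ totally dominating $V_J \cup \{x_1\}$ with the following properties: (1) $D$ is the union of disjoint stable sets $X$ and $Y$; (2) $Y$ is a (not necessarily proper) partial ISR for $V_J$ (so $|Y| \le |J|$); (3) every vertex in $Y$ has exactly one neighbour in $X$ (so $|X| \le |Y|$); (4) $X$ contains $x_1$. Then $G$ has an ISR containing $x_1$.
   Context: For $J \subseteq [r] = \{1,\ldots,r\}$, $V_J$ denotes $\bigcup_{i \in J} V_i$ (with the partition into the sets $V_i$, $i\in J$), and $G[\cdot]$ denotes an induced subgraph, which inherits the partition. An independent system of representatives (ISR) of $(V_1,\ldots,V_r)$ is a stable set of size $r$ in $G$ meeting each $V_i$ exactly once. A partial ISR for $V_J$ is a stable set contained in $V_J$ meeting each $V_i$ ($i \in J$) at most once. A set $D$ totally dominates a vertex set $W$ if every vertex of $W$ (including those in $D$) has a neighbour in $D$. *)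

theory Defs
  imports Main
begin

text \<open>A graph is given by a symmetric irreflexive adjacency relation E on vertices;
  its vertex set is the union of the parts V 1, ..., V r.\<close>

definition stable :: "('a \<Rightarrow> 'a \<Rightarrow> bool) \<Rightarrow> 'a set \<Rightarrow> bool" where
  "stable E S \<longleftrightarrow> (\<forall>u\<in>S. \<forall>v\<in>S. \<not> E u v)"

definition VJ :: "(nat \<Rightarrow> 'a set) \<Rightarrow> nat set \<Rightarrow> 'a set" where
  "VJ V J = (\<Union>i\<in>J. V i)"

text \<open>ISR of the partition restricted to the index set J (i.e. of G[V_J]).\<close>
definition ISR :: "('a \<Rightarrow> 'a \<Rightarrow> bool) \<Rightarrow> (nat \<Rightarrow> 'a set) \<Rightarrow> nat set \<Rightarrow> 'a set \<Rightarrow> bool" where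
  "ISR E V J S \<longleftrightarrow> S \<subseteq> VJ V J \<and> stable E S \<and> card S = card J
      \<and> (\<forall>i\<in>J. card (S \<inter> V i) = 1)"

definition partial_ISR :: "('a \<Rightarrow> 'a \<Rightarrow> bool) \<Rightarrow> (nat \<Rightarrow> 'a set) \<Rightarrow> nat set \<Rightarrow> 'a set \<Rightarrow> bool" where
  "partial_ISR E V J S \<longleftrightarrow> S \<subseteq> VJ V J \<and> stable E S
      \<and> (\<forall>i\<in>J. card (S \<inter> V i) \<le> 1)"

definition totally_dominates :: "('a \<Rightarrow> 'a \<Rightarrow> bool) \<Rightarrow> 'a set \<Rightarrow> 'a set \<Rightarrow> bool" where
  "totally_dominates E D W \<longleftrightarrow> (\<forall>w\<in>W. \<exists>d\<in>D. E w d)"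

end

theory Submission
  imports Defs
begin

locale isrs =
  fixes E :: "'a \<Rightarrow> 'a \<Rightarrow> bool" and V :: "nat \<Rightarrow> 'a set" and r :: nat and x1 :: 'a
  assumes sym: "\<And>u v. E u v \<Longrightarrow> E v u"
    and irrefl: "\<And>v. \<not> E v v"
    and r_pos: "1 \<le> r"
    and fin: "finite (VJ V {1..r})"
    and disj: "\<And>i j. i \<in> {1..r} \<Longrightarrow> j \<in> {1..r} \<Longrightarrow> i \<noteq> j \<Longrightarrow> V i \<inter> V j = {}"
    and parts_stable: "\<And>i. i \<in> {1..r} \<Longrightarrow> stable E (V i)"
    and x1: "x1 \<in> V r"
begin

definition Yo :: "'a set \<Rightarrow> 'a set \<Rightarrow> 'a set" where "Yo M X = {v\<in>M. \<exists>x\<in>X. E x v}"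
definition Jo :: "'a set \<Rightarrow> 'a set \<Rightarrow> nat set" where "Jo M X = {i\<in>{1..r-1}. Yo M X \<inter> V i \<noteq> {}}"
definition deg :: "'a set \<Rightarrow> 'a \<Rightarrow> nat" where "deg M u = card {v\<in>M. E u v}"

inductive valid :: "'a set \<Rightarrow> 'a list \<Rightarrow> bool" for M where
  base: "valid M [x1]"
| step: "valid M xs \<Longrightarrow> z \<in> VJ V (Jo M (set xs)) \<Longrightarrow> z \<notin> set xs \<Longrightarrow> (\<forall>u\<in>set xs. \<not> E z u)
     \<Longrightarrow> (\<forall>u\<in>Yo M (set xs). \<not> E z u) \<Longrightarrow> valid M (xs @ [z])"

lemma Yo_mono: "A \<subseteq> B \<Longrightarrow> Yo M A \<subseteq> Yo M B" unfolding Yo_def by blast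
lemma Jo_mono: "A \<subseteq> B \<Longrightarrow> Jo M A \<subseteq> Jo M B" unfolding Jo_def using Yo_mono by blast
lemma VJ_mono: "I \<subseteq> K \<Longrightarrow> VJ V I \<subseteq> VJ V K" unfolding VJ_def by blast

lemma valid_x1: "valid M xs \<Longrightarrow> x1 \<in> set xs"
  by (induction rule: valid.induct) auto

lemma valid_stable: "valid M xs \<Longrightarrow> stable E (set xs)"
  by (induction rule: valid.induct) (auto simp: stable_def irrefl dest: sym)

lemma valid_distinct: "valid M xs \<Longrightarrow> distinct xs"
  by (induction rule: valid.induct) auto

lemma valid_sub: "valid M xs \<Longrightarrow> set xs \<subseteq> VJ V (Jo M (set xs)) \<union> {x1}"
proof (induction rule: valid.induct)
  case base then show ?case by auto
next
  case (step xs z)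
  have "VJ V (Jo M (set xs)) \<subseteq> VJ V (Jo M (set (xs @ [z])))"
    by (rule VJ_mono, rule Jo_mono) auto
  then show ?case using step by auto
qed

lemma valid_unique: "valid M xs \<Longrightarrow> y \<in> Yo M (set xs) \<Longrightarrow> \<exists>x. {u\<in>set xs. E y u} = {x}"
proof (induction arbitrary: y rule: valid.induct)
  case base then show ?case unfolding Yo_def by (auto dest: sym)
next
  case (step xs z)
  show ?case
  proof (cases "y \<in> Yo M (set xs)")
    case True
    then have "\<not> E y z" using step(5) sym by blast
    then have "{u\<in>set (xs@[z]). E y u} = {u\<in>set xs. E y u}" by auto
    then show ?thesis using step.IH[OF True] by simp
  next
    case False
    with step.prems have "y \<in> M" "E z y" "\<forall>u\<in>set xs. \<not> E u y" unfolding Yo_def by auto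
    then have "{u\<in>set (xs@[z]). E y u} = {z}" using sym by auto
    then show ?thesis by blast
  qed
qed

lemma valid_nonempty: "valid M xs \<Longrightarrow> xs \<noteq> []"
  by (induction rule: valid.induct) auto

lemma valid_prefix: "valid M xs \<Longrightarrow> u \<in> set xs \<Longrightarrow> \<exists>a b. xs = a @ u # b \<and> valid M (a @ [u])"
proof (induction rule: valid.induct)
  case base then show ?case using valid.base by fastforce
next
  case (step xs z)
  show ?case
  proof (cases "u \<in> set xs")
    case True
    then obtain a b where "xs = a @ u # b" "valid M (a @ [u])" using step.IH by blast
    then show ?thesis by (intro exI[of _ a] exI[of _ "b @ [z]"]) auto
  next
    case False
    then have "u = z" using step.prems by auto
    then show ?thesis using valid.step[OF step.hyps] by auto
  qed
qed

lemma valid_snoc_inv: "valid M (a @ [w]) \<Longrightarrow> w \<noteq> x1 \<Longrightarrow> valid M a \<and> w \<in> VJ V (Jo M (set a))"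
  by (erule valid.cases) auto

lemma valid_transfer: "valid M s \<Longrightarrow> (\<forall>u\<in>set (butlast s). \<forall>v. (v \<in> M) \<noteq> (v \<in> M') \<longrightarrow> \<not> E u v) \<Longrightarrow> valid M' s"
proof (induction rule: valid.induct)
  case base then show ?case by (simp add: valid.base)
next
  case (step xs z)
  have h: "\<forall>u\<in>set xs. \<forall>v. (v \<in> M) \<noteq> (v \<in> M') \<longrightarrow> \<not> E u v" using step.prems by simp
  then have "\<forall>u\<in>set (butlast xs). \<forall>v. (v \<in> M) \<noteq> (v \<in> M') \<longrightarrow> \<not> E u v" by (meson in_set_butlastD)
  then have v': "valid M' xs" by (rule step.IH)
  have "Yo M (set xs) = Yo M' (set xs)" using h unfolding Yo_def by blast
  then have "Jo M (set xs) = Jo M' (set xs)" unfolding Jo_def by simp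
  then show ?case using valid.step[OF v'] step.hyps \<open>Yo M (set xs) = Yo M' (set xs)\<close> by simp
qed

lemma VJ_sub_all: "VJ V {1..r-1} \<subseteq> VJ V {1..r}" by (rule VJ_mono) auto

lemma ISR_fin: "ISR E V {1..r-1} M \<Longrightarrow> finite M"
proof -
  assume "ISR E V {1..r-1} M"
  then have "M \<subseteq> VJ V {1..r}" using VJ_sub_all unfolding ISR_def by auto
  then show "finite M" using fin by (rule finite_subset)
qed

lemma ISR_unique: "ISR E V {1..r-1} M \<Longrightarrow> j \<in> {1..r-1} \<Longrightarrow> y \<in> M \<Longrightarrow> y \<in> V j \<Longrightarrow> M \<inter> V j = {y}"
  unfolding ISR_def by (metis IntI card_1_singletonE singletonD)

lemma x1_notin: "i \<in> {1..r-1} \<Longrightarrow> x1 \<notin> V i"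
proof -
  assume i: "i \<in> {1..r-1}"
  then have "i \<in> {1..r}" "i \<noteq> r" by auto
  then have "V i \<inter> V r = {}" using disj[of i r] r_pos by auto
  then show ?thesis using x1 by auto
qed

lemma extend_ISR:
  assumes M: "ISR E V {1..r-1} M" and nb: "\<forall>v\<in>M. \<not> E x1 v"
  shows "ISR E V {1..r} (insert x1 M) \<and> x1 \<in> insert x1 M"
proof -
  have fM: "finite M" using ISR_fin[OF M] .
  have x1M: "x1 \<notin> M" using M x1_notin unfolding ISR_def VJ_def by auto
  have sub: "insert x1 M \<subseteq> VJ V {1..r}" using M VJ_sub_all x1 r_pos unfolding ISR_def VJ_def by auto
  have sM: "stable E M" using M unfolding ISR_def by simp
  have st: "stable E (insert x1 M)" using sM nb irrefl sym unfolding stable_def by (simp; blast)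
  have c: "card (insert x1 M) = card {1..r}" using M fM x1M r_pos unfolding ISR_def by simp
  have cl: "card (insert x1 M \<inter> V i) = 1" if i: "i \<in> {1..r}" for i
  proof (cases "i = r")
    case True
    have "M \<inter> V r = {}"
    proof -
      { fix v assume "v \<in> M" "v \<in> V r"
        then obtain j where "j \<in> {1..r-1}" "v \<in> V j" using M unfolding ISR_def VJ_def by auto
        moreover have "j \<in> {1..r}" "j \<noteq> r" using \<open>j \<in> {1..r-1}\<close> r_pos by auto
        ultimately have False using disj[of j r] \<open>v \<in> V r\<close> r_pos by auto }
      then show ?thesis by blast
    qed
    then have "insert x1 M \<inter> V i = {x1}" using True x1 by auto
    then show ?thesis by simp
  next
    case False
    then have i': "i \<in> {1..r-1}" using i by auto
    have "insert x1 M \<inter> V i = M \<inter> V i" using x1_notin[OF i'] by auto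
    then show ?thesis using M i' unfolding ISR_def by simp
  qed
  show ?thesis using sub st c cl unfolding ISR_def by auto
qed

definition degs :: "'a set \<Rightarrow> 'a list \<Rightarrow> nat list" where "degs M xs = map (deg M) xs"

lemma main:
  assumes isr: "\<exists>S. ISR E V {1..r-1} S"
    and no_obstr: "\<not> (\<exists>J X Y. J \<subseteq> {1..r-1}
          \<and> X \<union> Y \<subseteq> VJ V J \<union> {x1}
          \<and> totally_dominates E (X \<union> Y) (VJ V J \<union> {x1})
          \<and> X \<inter> Y = {} \<and> stable E X \<and> stable E Y
          \<and> partial_ISR E V J Y
          \<and> (\<forall>y\<in>Y. card {x\<in>X. E y x} = 1)
          \<and> x1 \<in> X)"
  shows "\<exists>S. ISR E V {1..r} S \<and> x1 \<in> S"
proof (rule ccontr)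
  assume noISR: "\<not> ?thesis"
  define N where "N = card (VJ V {1..r})"
  define S where "S = {l :: nat list. set l \<subseteq> {0..N} \<and> length l \<le> N}"
  have finS: "finite S" unfolding S_def by (rule finite_lists_length_le) simp
  define Cfg where "Cfg = {(M,xs). ISR E V {1..r-1} M \<and> valid M xs}"
  have inS: "degs M xs \<in> S" if "(M,xs) \<in> Cfg" for M xs
  proof -
    have M: "ISR E V {1..r-1} M" and v: "valid M xs" using that unfolding Cfg_def by auto
    have "Jo M (set xs) \<subseteq> {1..r}" unfolding Jo_def by auto
    then have s1: "VJ V (Jo M (set xs)) \<subseteq> VJ V {1..r}" by (rule VJ_mono)
    have "x1 \<in> VJ V {1..r}" using x1 r_pos unfolding VJ_def by auto
    then have "set xs \<subseteq> VJ V {1..r}" using valid_sub[OF v] s1 by blast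
    then have "card (set xs) \<le> N" unfolding N_def using fin card_mono by blast
    then have len: "length xs \<le> N" using distinct_card[OF valid_distinct[OF v]] by simp
    have "M \<subseteq> VJ V {1..r}" using M VJ_sub_all unfolding ISR_def by auto
    then have cM: "card M \<le> N" unfolding N_def using fin card_mono by blast
    have "deg M u \<le> N" for u
    proof -
      have "deg M u \<le> card M" unfolding deg_def using ISR_fin[OF M] by (intro card_mono) auto
      then show ?thesis using cM by simp
    qed
    then show ?thesis using len unfolding S_def degs_def by auto
  qed
  define gt where "gt = {(a::nat, b). b < a}"
  define R where "R = {(a,b). a \<in> S \<and> b \<in> S \<and> (b,a) \<in> lexord gt}"
  have transgt: "trans gt" unfolding gt_def trans_def by auto
  have "trans R" unfolding R_def trans_def using lexord_trans[OF _ _ transgt] by blast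
  moreover have "\<forall>x. (x,x) \<notin> R" unfolding R_def using lexord_irreflexive[of gt] gt_def by auto
  ultimately have "acyclic R" unfolding acyclic_def by simp
  moreover have "finite R"
  proof (rule finite_subset)
    show "R \<subseteq> S \<times> S" unfolding R_def by auto
    show "finite (S \<times> S)" using finS by simp
  qed
  ultimately have wfR: "wf R" using finite_acyclic_wf by blast
  define P where "P = (\<lambda>(M,xs). degs M xs) ` Cfg"
  obtain M0 where M0: "ISR E V {1..r-1} M0" using isr by blast
  have "degs M0 [x1] \<in> P" unfolding P_def Cfg_def using M0 valid.base by force
  then obtain l where lP: "l \<in> P" and lmin: "\<And>l'. (l', l) \<in> R \<Longrightarrow> l' \<notin> P"
    using wfE_min[OF wfR] by blast
  then obtain M xs where c: "(M,xs) \<in> Cfg" and l: "l = degs M xs" unfolding P_def by auto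
  have M: "ISR E V {1..r-1} M" and v: "valid M xs" using c unfolding Cfg_def by auto
  have better: False if "ISR E V {1..r-1} M'" "valid M' xs'" "(degs M xs, degs M' xs') \<in> lexord gt" for M' xs'
  proof -
    have c': "(M',xs') \<in> Cfg" using that unfolding Cfg_def by auto
    then have "(degs M' xs', l) \<in> R" using that inS c l unfolding R_def by auto
    moreover have "degs M' xs' \<in> P" using c' unfolding P_def by force
    ultimately show False using lmin by blast
  qed
  have fM: "finite M" using ISR_fin[OF M] .
  define X where "X = set xs"
  define Y where "Y = Yo M X"
  define J where "J = Jo M X"
  have Xst: "stable E X" unfolding X_def using valid_stable[OF v] .
  have uniq: "\<exists>x. {u\<in>X. E y u} = {x}" if "y \<in> Y" for y using valid_unique[OF v] that unfolding X_def Y_def by blast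
  have YM: "Y \<subseteq> M" unfolding Y_def Yo_def by auto
  have dom: "\<exists>d\<in>X \<union> Y. E w d" if w: "w \<in> VJ V J \<union> {x1}" for w
  proof (rule ccontr)
    assume nd: "\<not> ?thesis"
    show False
    proof (cases "w \<in> X")
      case False
      then have wx1: "w \<noteq> x1" using valid_x1[OF v] unfolding X_def by auto
      then have "w \<in> VJ V (Jo M (set xs))" using w unfolding J_def X_def by auto
      then have "valid M (xs @ [w])"
        using valid.step[OF v] False nd unfolding X_def Y_def by blast
      moreover have "(degs M xs, degs M (xs @ [w])) \<in> lexord gt"
        unfolding degs_def by (simp add: lexord_append_rightI)
      ultimately show False using better M by blast
    next
      case True
      have nbM: "\<forall>v\<in>M. \<not> E w v"
      proof (intro ballI notI)
        fix u assume "u \<in> M" "E w u"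
        then have "u \<in> Y" using True unfolding Y_def Yo_def by auto
        then show False using nd \<open>E w u\<close> by blast
      qed
      show False
      proof (cases "w = x1")
        case True
        then show False using extend_ISR[OF M] nbM noISR by blast
      next
        case wx1: False
        obtain a b where xs: "xs = a @ w # b" and va: "valid M (a @ [w])"
          using valid_prefix[OF v] True unfolding X_def by blast
        have "w \<in> VJ V (Jo M (set a))" using valid_snoc_inv[OF va wx1] by blast
        then obtain j where j: "j \<in> Jo M (set a)" "w \<in> V j" unfolding VJ_def by auto
        then obtain y where y: "y \<in> Yo M (set a)" "y \<in> V j" and j1: "j \<in> {1..r-1}" unfolding Jo_def by auto
        then obtain xp where xp: "xp \<in> set a" "E xp y" "y \<in> M" unfolding Yo_def by auto
        have xpX: "xp \<in> X" using xp xs unfolding X_def by auto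
        have yY: "y \<in> Y" using xp xpX unfolding Y_def Yo_def by auto
        obtain x0 where x0: "{u\<in>X. E y u} = {x0}" using uniq[OF yY] by blast
        have "E y xp" using xp(2) sym by blast
        then have "xp \<in> {u\<in>X. E y u}" using xpX by blast
        then have yx: "{u\<in>X. E y u} = {xp}" using x0 by auto
        obtain a' b' where xs': "xs = a' @ xp # b'" and va': "valid M (a' @ [xp])"
          using valid_prefix[OF v xpX[unfolded X_def]] by blast
        have dxs: "distinct xs" using valid_distinct[OF v] .
        have wy: "w \<noteq> y" proof
    assume "w = y"
    then have "E xp w" using xp(2) by simp
    then show False using Xst xpX True unfolding stable_def by blast
  qed
        define M' where "M' = insert w (M - {y})"
        have My: "M \<inter> V j = {y}" using ISR_unique[OF M j1 xp(3) y(2)] .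
        have wM: "w \<notin> M" using My j(2) wy by auto
        have M': "ISR E V {1..r-1} M'"
        proof -
          have sub: "M' \<subseteq> VJ V {1..r-1}" using M j1 j(2) unfolding M'_def ISR_def VJ_def by auto
          have sM: "stable E M" using M unfolding ISR_def by simp
          have st: "stable E M'" using sM nbM sym irrefl unfolding M'_def stable_def by (simp; blast)
          have card: "card M' = card M"
          proof -
            have "card M > 0" using fM xp(3) card_gt_0_iff by blast
            then show ?thesis unfolding M'_def using fM wM xp(3) by simp
          qed
          have cl: "card (M' \<inter> V i) = 1" if i: "i \<in> {1..r-1}" for i
          proof (cases "i = j")
            case True
            have "M' \<inter> V i = {w}" using My True j(2) unfolding M'_def by auto
            then show ?thesis by simp
          next
            case False
            have "i \<in> {1..r}" "j \<in> {1..r}" using i j1 by auto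
            then have "V i \<inter> V j = {}" using disj[of i j] False by blast
            then have "w \<notin> V i" "y \<notin> V i" using j(2) y(2) by auto
            then have "M' \<inter> V i = M \<inter> V i" unfolding M'_def by auto
            then show ?thesis using M i unfolding ISR_def by simp
          qed
          have cM: "card M = card {1..r-1}" using M unfolding ISR_def by blast
          show ?thesis unfolding ISR_def
            by (intro conjI ballI sub st cl) (simp_all only: card cM)
        qed
        have xpa': "xp \<notin> set a'" using dxs xs' by auto
        have nadj: "\<not> E u v" if u: "u \<in> set a'" and vv: "(v \<in> M) \<noteq> (v \<in> M')" for u v
        proof -
          have uX: "u \<in> X" using u xs' unfolding X_def by auto
          have "v = y \<or> v = w" using vv unfolding M'_def by auto
          then show ?thesis
          proof
            assume "v = y"
            show ?thesis
            proof
              assume "E u v"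
              then have "E y u" using \<open>v = y\<close> sym by blast
              then have "u \<in> {u\<in>X. E y u}" using uX by blast
              then have "u = xp" using yx by blast
              then show False using u xpa' by blast
            qed
          next
            assume "v = w"
            then show ?thesis using Xst uX True unfolding stable_def by blast
          qed
        qed
        have vM': "valid M' (a' @ [xp])"
          using valid_transfer[OF va'] nadj by simp
        have dsame: "deg M' u = deg M u" if "u \<in> set a'" for u
        proof -
          have "{v\<in>M'. E u v} = {v\<in>M. E u v}" using nadj[OF that] by blast
          then show ?thesis unfolding deg_def by simp
        qed
        have "\<not> E xp w" using Xst xpX True unfolding stable_def by blast
        then have "{v\<in>M'. E xp v} = {v\<in>M. E xp v} - {y}" unfolding M'_def using wy by auto
        moreover have "y \<in> {v\<in>M. E xp v}" using xp by auto
        moreover have "finite {v\<in>M. E xp v}" using fM by simp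
        ultimately have dxp: "deg M' xp = deg M xp - 1" "deg M xp > 0" unfolding deg_def
          by (auto simp: card_gt_0_iff)
        have "map (deg M') a' = map (deg M) a'" using dsame by simp
        then have "degs M' (a' @ [xp]) = map (deg M) a' @ [deg M xp - 1]" unfolding degs_def using dxp by simp
        moreover have "degs M xs = map (deg M) a' @ deg M xp # map (deg M) b'" unfolding degs_def xs' by simp
        ultimately have "(degs M xs, degs M' (a' @ [xp])) \<in> lexord gt"
          using dxp(2) by (simp add: lexord_append_left_rightI gt_def)
        then show False using better M' vM' by blast
      qed
    qed
  qed
  have "J \<subseteq> {1..r-1}" unfolding J_def Jo_def by auto
  moreover have "Y \<subseteq> VJ V J"
  proof
    fix y assume yY: "y \<in> Y"
    then have "y \<in> VJ V {1..r-1}" using YM M unfolding ISR_def by auto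
    then obtain i where "i \<in> {1..r-1}" "y \<in> V i" unfolding VJ_def by auto
    then show "y \<in> VJ V J" using yY unfolding J_def Jo_def VJ_def Y_def by auto
  qed
  moreover have "X \<subseteq> VJ V J \<union> {x1}" using valid_sub[OF v] unfolding X_def J_def by simp
  moreover have "totally_dominates E (X \<union> Y) (VJ V J \<union> {x1})" unfolding totally_dominates_def using dom by blast
  moreover have "X \<inter> Y = {}"
  proof -
    { fix u assume "u \<in> X" "u \<in> Y"
      then obtain x where "x \<in> X" "E x u" unfolding Y_def Yo_def by auto
      then have False using Xst \<open>u \<in> X\<close> unfolding stable_def by blast }
    then show ?thesis by blast
  qed
  moreover have "stable E Y" using YM M unfolding ISR_def stable_def by (meson subsetD)
  moreover have "partial_ISR E V J Y"
  proof -
    have "card (Y \<inter> V i) \<le> 1" if "i \<in> J" for i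
    proof -
      have "i \<in> {1..r-1}" using that unfolding J_def Jo_def by auto
      then have "card (M \<inter> V i) = 1" using M unfolding ISR_def by auto
      moreover have "card (Y \<inter> V i) \<le> card (M \<inter> V i)" using YM fM by (intro card_mono) auto
      ultimately show ?thesis by simp
    qed
    then show ?thesis unfolding partial_ISR_def using \<open>Y \<subseteq> VJ V J\<close> \<open>stable E Y\<close> by auto
  qed
  moreover have "\<forall>y\<in>Y. card {x\<in>X. E y x} = 1" using uniq by fastforce
  moreover have "x1 \<in> X" using valid_x1[OF v] unfolding X_def .
  ultimately have "\<exists>J X Y. J \<subseteq> {1..r-1}
          \<and> X \<union> Y \<subseteq> VJ V J \<union> {x1}
          \<and> totally_dominates E (X \<union> Y) (VJ V J \<union> {x1})
          \<and> X \<inter> Y = {} \<and> stable E X \<and> stable E Y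
          \<and> partial_ISR E V J Y
          \<and> (\<forall>y\<in>Y. card {x\<in>X. E y x} = 1)
          \<and> x1 \<in> X" using Xst by (intro exI[of _ J] exI[of _ X] exI[of _ Y]) auto
  then show False using no_obstr by simp
qed

end

theorem lemma3:
  fixes E :: "'a \<Rightarrow> 'a \<Rightarrow> bool" and V :: "nat \<Rightarrow> 'a set" and r :: nat and x1 :: 'a
  assumes sym: "\<And>u v. E u v \<Longrightarrow> E v u"
    and irrefl: "\<And>v. \<not> E v v"
    and r_pos: "1 \<le> r"
    and fin: "finite (VJ V {1..r})"
    and disj: "\<And>i j. i \<in> {1..r} \<Longrightarrow> j \<in> {1..r} \<Longrightarrow> i \<noteq> j \<Longrightarrow> V i \<inter> V j = {}"
    and parts_stable: "\<And>i. i \<in> {1..r} \<Longrightarrow> stable E (V i)"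
    and x1: "x1 \<in> V r"
    and isr: "\<exists>S. ISR E V {1..r-1} S"
    and no_obstr: "\<not> (\<exists>J X Y. J \<subseteq> {1..r-1}
          \<and> X \<union> Y \<subseteq> VJ V J \<union> {x1}
          \<and> totally_dominates E (X \<union> Y) (VJ V J \<union> {x1})
          \<and> X \<inter> Y = {} \<and> stable E X \<and> stable E Y
          \<and> partial_ISR E V J Y
          \<and> (\<forall>y\<in>Y. card {x\<in>X. E y x} = 1)
          \<and> x1 \<in> X)"
  shows "\<exists>S. ISR E V {1..r} S \<and> x1 \<in> S"
proof -
  interpret isrs E V r x1 using sym irrefl r_pos fin disj parts_stable x1 by unfold_locales auto
  show ?thesis using main[OF isr no_obstr] .
qed

end
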